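(* There exist two normal infinite words $x$ and $y$ such that $x\vee y$ is normal but $x$ and $y$ are not finite-state independent.
   Context: For $x=a_1a_2\cdots$, $y=b_1b_2\cdots$, $x\vee y=a_1b_1a_2b_2\cdots$. Normality: for all $\ell$ and $u\in A^\ell$, the frequency of aligned occurrences (occurrences at positions $i\equiv1\bmod\ell$) of $u$ in prefixes of $x$, normalized by $n/\ell$, tends to $|A|^{-\ell}$. A $k$-automaton $\langle Q,A,\delta,I\rangle$ has finite state set $Q$, transitions $\delta\subseteq Q\times(A\cup\{\varepsilon\})^k\times Q$, initial states $I$; an infinite run is accepting if it starts in $I$ and all label components are infinite. It is $\ell$-deterministic if $I$ is a singleton and for two transitions from the same state, $\alpha_j=\varepsilon$ for some $j\le\ell$ forces $\alpha'_j=\varepsilon$, and agreement on the first $\ell$ label components forces agreement of the remaining components and targets. $\rho(x)$ is the infimum over injective $1$-deterministic $2$-automata $\mathcal T$ of $\liminf_n |v_1\cdots v_n|/n$, where $q_0\xrightarrow{a_1|v_1}q_1\xrightarrow{a_2|v_2}\cdots$ is the run on $x$. A compressor is a $2$-deterministic $3$-automaton with input $x$, oracle $y$, output, injective in $x$ for fixed $y$; $\rho_{\mathcal C}(x/y)=\liminf_n|w_1\cdots w_n|/|\alpha_1\cdots\alpha_n|$ for the run $q_0\xrightarrow{\alpha_1,\beta_1|w_1}\cdots$, and $\rho(x/y)$ is the infimum over compressors. $x,y$ are finite-state independent if $\rho(x/y)=\rho(x)$, $\rho(y/x)=\rho(y)$ and $\rho(x),\rho(y)\neq0$. *)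

theory Defs
  imports Complex_Main "HOL-Library.Extended_Real" "HOL-Library.Liminf_Limsup"
begin

text \<open>Infinite words over an alphabet 'a are functions nat => 'a (position 0 is the
  first letter a_1).\<close>

definition join :: "(nat \<Rightarrow> 'a) \<Rightarrow> (nat \<Rightarrow> 'a) \<Rightarrow> nat \<Rightarrow> 'a" where
  "join x y i = (if even i then x (i div 2) else y (i div 2))"

definition block :: "(nat \<Rightarrow> 'a) \<Rightarrow> nat \<Rightarrow> nat \<Rightarrow> 'a list" where
  "block x l j = map (\<lambda>k. x (j * l + k)) [0..<l]"

definition aligned_occ :: "(nat \<Rightarrow> 'a) \<Rightarrow> 'a list \<Rightarrow> nat \<Rightarrow> nat" where
  "aligned_occ x u n = card {j. j < n div length u \<and> block x (length u) j = u}"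

definition normal :: "(nat \<Rightarrow> 'a::finite) \<Rightarrow> bool" where
  "normal x \<longleftrightarrow> (\<forall>u::'a list. length u \<ge> 1 \<longrightarrow>
     (\<lambda>n. real (aligned_occ x u n) / (real n / real (length u)))
       \<longlonglongrightarrow> 1 / real (card (UNIV :: 'a set)) ^ length u)"

text \<open>States are natural numbers; a label is a list of length k over 'a option
  (None = epsilon).\<close>
record 'a kaut =
  states :: "nat set"
  trans :: "(nat \<times> 'a option list \<times> nat) set"
  init :: "nat set"

definition is_kaut :: "nat \<Rightarrow> 'a kaut \<Rightarrow> bool" where
  "is_kaut k M \<longleftrightarrow> finite (states M) \<and> init M \<subseteq> states M \<and>
     (\<forall>(p, \<alpha>, q) \<in> trans M. p \<in> states M \<and> q \<in> states M \<and> length \<alpha> = k)"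

definition is_det :: "nat \<Rightarrow> 'a kaut \<Rightarrow> bool" where
  "is_det l M \<longleftrightarrow> (\<exists>q0. init M = {q0}) \<and>
     (\<forall>(p, \<alpha>, q) \<in> trans M. \<forall>(p', \<alpha>', q') \<in> trans M. p = p' \<longrightarrow>
        (\<forall>j<l. \<alpha> ! j = None \<longrightarrow> \<alpha>' ! j = None) \<and>
        (take l \<alpha> = take l \<alpha>' \<longrightarrow> \<alpha> = \<alpha>' \<and> q = q'))"

definition cnt :: "(nat \<Rightarrow> 'a option list) \<Rightarrow> nat \<Rightarrow> nat \<Rightarrow> nat" where
  "cnt lab j n = card {i. i < n \<and> lab i ! j \<noteq> None}"

text \<open>The infinite word carried by component j of a run (meaningful when infinite).\<close>
definition comp :: "(nat \<Rightarrow> 'a option list) \<Rightarrow> nat \<Rightarrow> nat \<Rightarrow> 'a" where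
  "comp lab j m = the (lab (LEAST i. lab i ! j \<noteq> None \<and> cnt lab j i = m) ! j)"

definition accepting_run :: "nat \<Rightarrow> 'a kaut \<Rightarrow> (nat \<Rightarrow> nat) \<Rightarrow> (nat \<Rightarrow> 'a option list) \<Rightarrow> bool" where
  "accepting_run k M r lab \<longleftrightarrow> r 0 \<in> init M \<and>
     (\<forall>i. (r i, lab i, r (Suc i)) \<in> trans M) \<and>
     (\<forall>j<k. infinite {i. lab i ! j \<noteq> None})"

definition injective_transducer :: "'a kaut \<Rightarrow> bool" where
  "injective_transducer T \<longleftrightarrow> is_kaut 2 T \<and> is_det 1 T \<and>
     (\<forall>r lab r' lab'. accepting_run 2 T r lab \<longrightarrow> accepting_run 2 T r' lab' \<longrightarrow>
        comp lab 0 \<noteq> comp lab' 0 \<longrightarrow> comp lab 1 \<noteq> comp lab' 1)"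

definition run_ratio :: "(nat \<Rightarrow> 'a option list) \<Rightarrow> nat \<Rightarrow> nat \<Rightarrow> ereal" where
  "run_ratio lab inp out = liminf (\<lambda>n. ereal (real (cnt lab out n) / real (cnt lab inp n)))"

definition rho :: "(nat \<Rightarrow> 'a) \<Rightarrow> ereal" where
  "rho x = Inf {run_ratio lab 0 1 | T r lab. injective_transducer (T :: 'a kaut) \<and>
                  accepting_run 2 T r lab \<and> comp lab 0 = x}"

definition compressor :: "'a kaut \<Rightarrow> bool" where
  "compressor C \<longleftrightarrow> is_kaut 3 C \<and> is_det 2 C \<and>
     (\<forall>r lab r' lab'. accepting_run 3 C r lab \<longrightarrow> accepting_run 3 C r' lab' \<longrightarrow>
        comp lab 1 = comp lab' 1 \<longrightarrow> comp lab 0 \<noteq> comp lab' 0 \<longrightarrow>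
        comp lab 2 \<noteq> comp lab' 2)"

definition rho_cond :: "(nat \<Rightarrow> 'a) \<Rightarrow> (nat \<Rightarrow> 'a) \<Rightarrow> ereal" where
  "rho_cond x y = Inf {run_ratio lab 0 2 | C r lab. compressor (C :: 'a kaut) \<and>
                  accepting_run 3 C r lab \<and> comp lab 0 = x \<and> comp lab 1 = y}"

definition fs_independent :: "(nat \<Rightarrow> 'a) \<Rightarrow> (nat \<Rightarrow> 'a) \<Rightarrow> bool" where
  "fs_independent x y \<longleftrightarrow> rho_cond x y = rho x \<and> rho_cond y x = rho y \<and>
     rho x \<noteq> 0 \<and> rho y \<noteq> 0"

end

theory Submission
  imports "HOL-Probability.Probability" "HOL-Library.Discrete_Functions" Defs
begin

definition PM :: "(nat \<Rightarrow> 'a::finite) measure" where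
  "PM = PiM UNIV (\<lambda>_. uniform_count_measure UNIV)"

lemma space_PM: "space PM = UNIV"
  by (simp add: PM_def space_PiM space_uniform_count_measure)

lemma prob_space_PM: "prob_space (PM :: (nat \<Rightarrow> 'a::finite) measure)"
  unfolding PM_def by (intro prob_space_PiM prob_space_uniform_count_measure) auto

lemma sets_cyl_PM:
  assumes "finite T"
  shows "{\<omega>. \<forall>p\<in>T. \<omega> (g p) = w p} \<in> sets (PM :: (nat \<Rightarrow> 'a::finite) measure)"
proof -
  have eq: "{\<omega>. \<forall>p\<in>T. \<omega> (g p) = w p} = (\<Inter>p\<in>T. {\<omega>\<in>space PM. \<omega> (g p) = w p})"
    using space_PM by auto
  show ?thesis unfolding eq
  proof (cases "T = {}")
    case True then show "(\<Inter>p\<in>T. {\<omega>\<in>space PM. \<omega> (g p) = w p}) \<in> sets PM"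
      using sets.top[of PM] by (simp add: space_PM)
  next
    case False
    show "(\<Inter>p\<in>T. {\<omega>\<in>space PM. \<omega> (g p) = w p}) \<in> sets PM"
      using assms False unfolding PM_def
      by (intro sets.finite_INT) (auto intro!: sets_Collect_single' simp: sets_uniform_count_measure space_uniform_count_measure)
  qed
qed

lemma measure_cyl_PM:
  assumes "finite T" "inj_on g T"
  shows "measure (PM :: (nat \<Rightarrow> 'a::finite) measure) {\<omega>. \<forall>p\<in>T. \<omega> (g p) = w p}
     = (1 / real (card (UNIV::'a set))) ^ card T"
proof -
  define w' where "w' = (\<lambda>s. w (inv_into T g s))"
  have eq: "{\<omega>. \<forall>p\<in>T. \<omega> (g p) = w p} = {\<omega>\<in>space PM. \<forall>s\<in>g`T. \<omega> s \<in> {w' s}}"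
    using assms by (auto simp: w'_def space_PM)
  have "emeasure (PM :: (nat \<Rightarrow> 'a::finite) measure) {\<omega>\<in>space PM. \<forall>s\<in>g`T. \<omega> s \<in> {w' s}}
      = (\<Prod>s\<in>g`T. emeasure (uniform_count_measure (UNIV::'a set)) {w' s})"
    unfolding PM_def
    apply (subst emeasure_PiM_emb[symmetric])
    using assms by (auto simp: prod_emb_def PiE_iff space_PiM sets_uniform_count_measure
        prob_space_uniform_count_measure intro!: arg_cong2[where f=emeasure])
  also have "\<dots> = (\<Prod>s\<in>g`T. ennreal (1 / real (card (UNIV::'a set))))"
    by (intro prod.cong refl) (simp add: emeasure_uniform_count_measure divide_ennreal)
  also have "\<dots> = ennreal ((1 / real (card (UNIV::'a set))) ^ card T)"
    using assms by (simp add: card_image ennreal_power)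
  finally show ?thesis unfolding eq
    by (simp add: measure_def)
qed


locale blk =
  fixes idx :: "nat \<Rightarrow> nat" and l :: nat and u :: "'a::finite list" and j0 C :: nat
    and D :: "nat \<Rightarrow> nat set"
  assumes l_pos: "l \<ge> 1" and len_u: "length u = l"
    and inj: "\<And>j. j \<ge> j0 \<Longrightarrow> inj_on idx {j*l..<j*l+l}"
    and dep: "\<And>j k. idx ` {j*l..<j*l+l} \<inter> idx ` {k*l..<k*l+l} \<noteq> {} \<Longrightarrow> k \<in> D j"
    and finD: "\<And>j. finite (D j)" and cardD: "\<And>j. card (D j) \<le> C"
begin

sublocale prob_space "PM :: (nat \<Rightarrow> 'a) measure" by (rule prob_space_PM)

definition B :: "nat \<Rightarrow> nat set" where "B j = {j*l..<j*l+l}"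
definition E :: "nat \<Rightarrow> (nat \<Rightarrow> 'a) set" where
  "E j = {\<omega>. \<forall>p\<in>B j. \<omega> (idx p) = u!(p mod l)}"
definition pp :: real where "pp = (1 / real CARD('a)) ^ l"

lemma E_sets[measurable]: "E j \<in> sets PM"
  unfolding E_def B_def by (rule sets_cyl_PM) simp

lemma card_B: "card (B j) = l" by (simp add: B_def)

lemma prob_E: "j \<ge> j0 \<Longrightarrow> prob (E j) = pp"
  unfolding E_def pp_def using measure_cyl_PM[of "B j" idx "\<lambda>p. u!(p mod l)"] inj[of j]
  by (simp add: B_def)

lemma B_disj: "j \<noteq> k \<Longrightarrow> B j \<inter> B k = {}"
proof (rule ccontr)
  assume "j \<noteq> k" "B j \<inter> B k \<noteq> {}"
  then obtain p where "p \<in> B j" "p \<in> B k" by blast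
  then have "j*l \<le> p" "p < j*l+l" "k*l \<le> p" "p < k*l+l" by (auto simp: B_def)
  then have "p div l = j" "p div l = k" using l_pos
    by (intro div_nat_eqI; simp add: mult.commute)+
  with \<open>j \<noteq> k\<close> show False by simp
qed

lemma prob_EE: assumes "j \<ge> j0" "k \<ge> j0" "k \<notin> D j" shows "prob (E j \<inter> E k) = pp^2"
proof -
  have disj: "idx ` B j \<inter> idx ` B k = {}" using dep[of j k] assms(3) by (auto simp: B_def)
  have jk: "j \<noteq> k"
  proof
    assume "j = k"
    then have "idx ` B j \<noteq> {}" using l_pos by (auto simp: B_def)
    with disj \<open>j = k\<close> show False by auto
  qed
  have injU: "inj_on idx (B j \<union> B k)"
    using inj[OF assms(1)] inj[OF assms(2)] disj by (auto simp: B_def inj_on_Un)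
  have "E j \<inter> E k = {\<omega>. \<forall>p\<in>B j \<union> B k. \<omega> (idx p) = u!(p mod l)}"
    by (auto simp: E_def)
  moreover have "card (B j \<union> B k) = 2*l"
    using card_Un_disjoint[of "B j" "B k"] B_disj[OF jk] by (simp add: card_B B_def)
  ultimately show ?thesis using measure_cyl_PM[OF _ injU, of "\<lambda>p. u!(p mod l)"]
    by (simp add: B_def pp_def power_mult[symmetric] mult.commute)
qed

definition f :: "nat \<Rightarrow> (nat \<Rightarrow> 'a) \<Rightarrow> real" where
  "f N \<omega> = (\<Sum>j\<in>{j0..<N}. indicator (E j) \<omega>)"

lemma integrable_ind[simp]: fixes A :: "(nat \<Rightarrow> 'a) set" assumes "A \<in> sets PM" shows "integrable PM (indicator A :: _ \<Rightarrow> real)"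
proof -
  have *: "(\<lambda>x. indicator A x *\<^sub>R (1::real)) = indicator A" by (rule ext) simp
  have "emeasure PM A < \<infinity>" using emeasure_finite[of A] by (simp add: less_top[symmetric])
  from Bochner_Integration.integrable_indicator[OF assms this, of "1::real"]
  show ?thesis unfolding * .
qed

lemma f_measurable[measurable]: "f N \<in> borel_measurable PM"
  unfolding f_def by (intro borel_measurable_sum borel_measurable_indicator E_sets)

lemma integrable_f: "integrable PM (f N)"
  unfolding f_def by (intro Bochner_Integration.integrable_sum integrable_indicator) (auto simp: emeasure_eq_measure)

lemma f_sq: "(f N \<omega>)^2 = (\<Sum>j\<in>{j0..<N}. \<Sum>k\<in>{j0..<N}. indicator (E j \<inter> E k) \<omega>)"
  unfolding f_def power2_eq_square sum_product by (simp add: indicator_inter_arith)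

lemma integrable_f2: "integrable PM (\<lambda>\<omega>. (f N \<omega>)^2)"
  unfolding f_sq by (intro Bochner_Integration.integrable_sum integrable_indicator) (auto simp: emeasure_eq_measure)

lemma expectation_f: "expectation (f N) = real (card {j0..<N}) * pp"
proof -
  have "expectation (f N) = (\<Sum>j\<in>{j0..<N}. prob (E j))"
    unfolding f_def by (subst Bochner_Integration.integral_sum) (auto simp: space_PM)
  also have "\<dots> = (\<Sum>j\<in>{j0..<N}. pp)" by (intro sum.cong refl prob_E) auto
  finally show ?thesis by simp
qed

lemma expectation_f2: "expectation (\<lambda>\<omega>. (f N \<omega>)^2) = (\<Sum>j\<in>{j0..<N}. \<Sum>k\<in>{j0..<N}. prob (E j \<inter> E k))"
  unfolding f_sq
  by (subst Bochner_Integration.integral_sum, force simp: emeasure_eq_measure, intro sum.cong refl, subst Bochner_Integration.integral_sum) (auto simp: space_PM)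

lemma variance_f: "variance (f N) \<le> real C * real N"
proof -
  let ?J = "{j0..<N}"
  have eq: "(real (card ?J) * pp)^2 = (\<Sum>j\<in>?J. \<Sum>k\<in>?J. pp^2)"
    by (simp add: power2_eq_square del: card_atLeastLessThan)
  have "variance (f N) = expectation (\<lambda>\<omega>. (f N \<omega>)^2) - (real (card ?J) * pp)^2"
    using variance_eq[OF integrable_f integrable_f2] unfolding expectation_f .
  also have "\<dots> = (\<Sum>j\<in>?J. \<Sum>k\<in>?J. prob (E j \<inter> E k) - pp^2)"
    unfolding expectation_f2 eq
    by (simp add: sum_subtractf)
  also have "\<dots> \<le> (\<Sum>j\<in>?J. \<Sum>k\<in>?J. (if k \<in> D j then 1 else 0))"
  proof (intro sum_mono)
    fix j k assume "j \<in> ?J" "k \<in> ?J"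
    then show "prob (E j \<inter> E k) - pp^2 \<le> (if k \<in> D j then 1 else 0)"
    proof (cases "k \<in> D j")
      case True
      have a: "prob (E j \<inter> E k) \<le> 1" by (rule prob_le_1)
      have b: "0 \<le> pp^2" by simp
      have "prob (E j \<inter> E k) - pp^2 \<le> 1" using a b by linarith
      then show ?thesis using True by simp
    next
      case False
      then show ?thesis using prob_EE[of j k] \<open>j \<in> ?J\<close> \<open>k \<in> ?J\<close> by simp
    qed
  qed
  also have "\<dots> = (\<Sum>j\<in>?J. real (card (?J \<inter> D j)))"
    by (intro sum.cong refl) (simp add: sum.If_cases)
  also have "\<dots> \<le> (\<Sum>j\<in>?J. real C)"
    by (intro sum_mono) (meson of_nat_le_iff order_trans card_mono finD inf_le2 cardD)
  also have "\<dots> \<le> real C * real N"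
    by (simp add: mult.commute mult_left_mono)
  finally show ?thesis .
qed

end

lemma floor_sqrt_at_top: "filterlim floor_sqrt at_top at_top"
  unfolding filterlim_at_top
proof (intro allI)
  fix Z :: nat
  show "eventually (\<lambda>N. Z \<le> floor_sqrt N) at_top"
    unfolding eventually_at_top_linorder
    by (intro exI[of _ "Z^2"]) (metis floor_sqrt_inverse_power2 mono_floor_sqrt')
qed

lemma interp_squares:
  fixes c :: "nat \<Rightarrow> real"
  assumes mono: "mono c" and nonneg: "\<And>n. c n \<ge> 0"
    and lim: "(\<lambda>m. c ((Suc m)^2) / real ((Suc m)^2)) \<longlonglongrightarrow> L"
  shows "(\<lambda>N. c N / real N) \<longlonglongrightarrow> L"
proof -
  have i1: "(\<lambda>m. 1 / real (Suc m)) \<longlonglongrightarrow> 0"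
    using LIMSEQ_inverse_real_of_nat by (simp add: inverse_eq_divide)
  have i2: "(\<lambda>m. 1 / real (Suc (Suc m))) \<longlonglongrightarrow> 0"
    using LIMSEQ_Suc[OF i1] .
  define a where "a m = c ((Suc m)^2) / real ((Suc m)^2)" for m
  have r1: "(\<lambda>m. real (Suc m) / real (Suc (Suc m))) \<longlonglongrightarrow> 1"
  proof -
    have "(\<lambda>m. 1 - 1 / real (Suc (Suc m))) \<longlonglongrightarrow> 1 - 0"
      by (intro tendsto_intros i2)
    moreover have "real (Suc m) / real (Suc (Suc m)) = 1 - 1 / real (Suc (Suc m))" for m
      by (simp add: field_simps)
    ultimately show ?thesis by simp
  qed
  have r2: "(\<lambda>m. real (Suc (Suc m)) / real (Suc m)) \<longlonglongrightarrow> 1"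
  proof -
    have "(\<lambda>m. 1 + 1 / real (Suc m)) \<longlonglongrightarrow> 1 + 0"
      by (intro tendsto_intros i1)
    moreover have "real (Suc (Suc m)) / real (Suc m) = 1 + 1 / real (Suc m)" for m
      by (simp add: field_simps)
    ultimately show ?thesis by simp
  qed
  have lo: "(\<lambda>m. a m * (real (Suc m) / real (Suc (Suc m)))^2) \<longlonglongrightarrow> L * 1^2"
    using lim r1 unfolding a_def by (intro tendsto_intros)
  have hi: "(\<lambda>m. a (Suc m) * (real (Suc (Suc m)) / real (Suc m))^2) \<longlonglongrightarrow> L * 1^2"
    using LIMSEQ_Suc[OF lim] r2 unfolding a_def by (intro tendsto_intros)
  define s where "s N = floor_sqrt N - 1" for N
  have s_lim: "filterlim s at_top at_top"
    unfolding s_def filterlim_at_top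
  proof (intro allI)
    fix Z :: nat
    have "eventually (\<lambda>N. Z + 1 \<le> floor_sqrt N) at_top"
      using floor_sqrt_at_top unfolding filterlim_at_top by blast
    then show "eventually (\<lambda>N. Z \<le> floor_sqrt N - 1) at_top"
      by eventually_elim simp
  qed
  have lo': "(\<lambda>N. a (s N) * (real (Suc (s N)) / real (Suc (Suc (s N))))^2) \<longlonglongrightarrow> L"
    using filterlim_compose[OF lo s_lim] by simp
  have hi': "(\<lambda>N. a (Suc (s N)) * (real (Suc (Suc (s N))) / real (Suc (s N)))^2) \<longlonglongrightarrow> L"
    using filterlim_compose[OF hi s_lim] by simp
  show ?thesis
  proof (rule tendsto_sandwich[OF _ _ lo' hi'])
    have "eventually (\<lambda>N::nat. 1 \<le> N) at_top" by (rule eventually_ge_at_top)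
    then have ev: "eventually (\<lambda>N. (Suc (s N))^2 \<le> N \<and> N < (Suc (Suc (s N)))^2) at_top"
    proof eventually_elim
      case (elim N)
      then have "floor_sqrt N > 0" by simp
      then have "Suc (s N) = floor_sqrt N" by (simp add: s_def)
      then show ?case
        using floor_sqrt_power2_le[of N] Suc_floor_sqrt_power2_gt[of N] by simp
    qed
    show "eventually (\<lambda>N. a (s N) * (real (Suc (s N)) / real (Suc (Suc (s N))))^2 \<le> c N / real N) at_top"
      using ev
    proof eventually_elim
      case (elim N)
      define m where "m = Suc (s N)"
      have b: "m^2 \<le> N" "N < (Suc m)^2" using elim by (auto simp: m_def)
      have "m^2 > 0" by (simp add: m_def)
      then have Npos: "real N > 0" using b by linarith
      have N1: "real N \<le> real ((Suc m)^2)" using b by linarith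
      have "a (s N) * (real m / real (Suc m))^2 = c (m^2) / real ((Suc m)^2)"
        by (simp add: a_def m_def power_divide)
      also have "\<dots> \<le> c (m^2) / real N"
        by (rule divide_left_mono[OF N1 nonneg]) (use Npos in simp)
      also have "\<dots> \<le> c N / real N"
        using b Npos mono by (intro divide_right_mono) (auto simp: mono_def)
      finally show ?case by (simp add: m_def)
    qed
    show "eventually (\<lambda>N. c N / real N \<le> a (Suc (s N)) * (real (Suc (Suc (s N))) / real (Suc (s N)))^2) at_top"
      using ev
    proof eventually_elim
      case (elim N)
      define m where "m = Suc (s N)"
      have b: "m^2 \<le> N" "N < (Suc m)^2" using elim by (auto simp: m_def)
      have mpos: "real (m^2) > 0" by (simp add: m_def)
      have N2: "real (m^2) \<le> real N" using b by linarith
      have Np: "real N > 0" using mpos N2 by linarith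
      have "c N / real N \<le> c ((Suc m)^2) / real N"
        using b mono mpos by (intro divide_right_mono) (auto simp: mono_def)
      also have "\<dots> \<le> c ((Suc m)^2) / real (m^2)"
        by (rule divide_left_mono[OF N2 nonneg]) (use Np mpos in simp)
      also have "\<dots> = a (Suc (s N)) * (real (Suc m) / real m)^2"
        by (simp add: a_def m_def power_divide)
      finally show ?case by (simp add: m_def)
    qed
  qed
qed


lemma summable_inv_sq: "summable (\<lambda>m. 1 / (real (Suc m))^2)"
proof -
  have "summable (\<lambda>n. inverse (real n ^ 2))"
    by (rule inverse_power_summable) simp
  from summable_ignore_initial_segment[OF this, of 1]
  show ?thesis by (simp add: inverse_eq_divide)
qed

context blk
begin

definition cntE :: "nat \<Rightarrow> (nat \<Rightarrow> 'a) \<Rightarrow> real" where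
  "cntE N \<omega> = real (card {j. j < N \<and> \<omega> \<in> E j})"

lemma f_eq: "f N \<omega> = real (card {j\<in>{j0..<N}. \<omega> \<in> E j})"
proof -
  have "f N \<omega> = (\<Sum>j\<in>{j0..<N}. if \<omega> \<in> E j then 1 else 0)"
    unfolding f_def by (intro sum.cong refl) (simp add: indicator_def)
  also have "\<dots> = real (card {j\<in>{j0..<N}. \<omega> \<in> E j})"
    by (simp add: sum.If_cases Int_def)
  finally show ?thesis .
qed

lemma cnt_f: "\<bar>cntE N \<omega> - f N \<omega>\<bar> \<le> real j0"
proof -
  have s1: "{j\<in>{j0..<N}. \<omega> \<in> E j} \<subseteq> {j. j < N \<and> \<omega> \<in> E j}" by auto
  have s2: "{j. j < N \<and> \<omega> \<in> E j} \<subseteq> {j\<in>{j0..<N}. \<omega> \<in> E j} \<union> {..<j0}" by auto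
  have "card {j\<in>{j0..<N}. \<omega> \<in> E j} \<le> card {j. j < N \<and> \<omega> \<in> E j}"
    by (rule card_mono[OF _ s1]) simp
  moreover have "card {j. j < N \<and> \<omega> \<in> E j} \<le> card {j\<in>{j0..<N}. \<omega> \<in> E j} + j0"
    using card_mono[OF _ s2] card_Un_le[of "{j\<in>{j0..<N}. \<omega> \<in> E j}" "{..<j0}"] by simp
  ultimately show ?thesis unfolding cntE_def f_eq by linarith
qed

lemma mu_bound: "\<bar>real (card {j0..<N}) * pp - real N * pp\<bar> \<le> real j0"
proof -
  have p0: "0 \<le> pp" "pp \<le> 1" unfolding pp_def by (auto intro!: power_le_one)
  have "real N - real j0 \<le> real (card {j0..<N})" "real (card {j0..<N}) \<le> real N" by auto
  then have "\<bar>real (card {j0..<N}) - real N\<bar> \<le> real j0" by linarith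
  then have "\<bar>real (card {j0..<N}) - real N\<bar> * pp \<le> real j0 * 1"
    using p0 by (intro mult_mono) auto
  then show ?thesis by (simp add: left_diff_distrib[symmetric] abs_mult p0)
qed

lemma cheb:
  assumes "N > 0" "e > 0"
  shows "prob {\<omega> \<in> space PM. \<bar>f N \<omega> - real (card {j0..<N}) * pp\<bar> \<ge> e * real N}
           \<le> real C / (e^2 * real N)"
proof -
  have "prob {\<omega> \<in> space PM. \<bar>f N \<omega> - expectation (f N)\<bar> \<ge> e * real N} \<le> variance (f N) / (e * real N)^2"
    using assms by (intro Chebyshev_inequality integrable_f2) auto
  also have "\<dots> \<le> (real C * real N) / (e * real N)^2"
    using assms by (intro divide_right_mono variance_f) auto
  also have "\<dots> = real C / (e^2 * real N)"
    using assms by (simp add: power2_eq_square field_simps)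
  finally show ?thesis unfolding expectation_f .
qed

definition A :: "nat \<Rightarrow> nat \<Rightarrow> (nat \<Rightarrow> 'a) set" where
  "A r m = {\<omega> \<in> space PM. \<bar>f ((Suc m)^2) \<omega> - real (card {j0..<(Suc m)^2}) * pp\<bar> \<ge> (1 / real (Suc r)) * real ((Suc m)^2)}"

lemma A_sets: "A r m \<in> sets PM"
  unfolding A_def by measurable

lemma AE_sq: "AE \<omega> in PM. \<forall>r. eventually (\<lambda>m. \<omega> \<notin> A r m) sequentially"
proof (subst AE_all_countable, intro allI)
  fix r
  have bnd: "measure PM (A r m) \<le> real C * (real (Suc r))^2 * (1 / (real (Suc m))^2)" for m
  proof -
    have "measure PM (A r m) \<le> real C / ((1 / real (Suc r))^2 * real ((Suc m)^2))"
      unfolding A_def by (intro cheb) auto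
    also have "\<dots> = real C * (real (Suc r))^2 * (1 / (real (Suc m))^2)"
      by (simp add: field_simps)
    finally show ?thesis .
  qed
  have "summable (\<lambda>m. measure PM (A r m))"
    by (rule summable_comparison_test'[OF summable_mult[OF summable_inv_sq, of "real C * (real (Suc r))^2"]])
       (use bnd in auto)
  then have "AE \<omega> in PM. eventually (\<lambda>m. \<omega> \<in> space PM - A r m) sequentially"
    by (intro borel_cantelli_AE1 A_sets) (auto simp: emeasure_eq_measure)
  then show "AE \<omega> in PM. eventually (\<lambda>m. \<omega> \<notin> A r m) sequentially"
    by (rule AE_mp) (auto elim: eventually_mono)
qed

end

context blk
begin

lemma sq_conv:
  assumes H: "\<forall>r. eventually (\<lambda>m. \<omega> \<notin> A r m) sequentially"
  shows "(\<lambda>m. cntE ((Suc m)^2) \<omega> / real ((Suc m)^2)) \<longlonglongrightarrow> pp"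
proof -
  have t0: "(\<lambda>m. real (2 * j0) / real ((Suc m)^2)) \<longlonglongrightarrow> 0"
  proof (rule tendsto_sandwich[of "\<lambda>_. 0" _ _ "\<lambda>m. real (2*j0) * (1 / real (Suc m))"])
    show "eventually (\<lambda>m. 0 \<le> real (2 * j0) / real ((Suc m)^2)) sequentially" by simp
    show "eventually (\<lambda>m. real (2 * j0) / real ((Suc m)^2) \<le> real (2*j0) * (1 / real (Suc m))) sequentially"
    proof (intro always_eventually allI)
      fix m
      have "real (Suc m) \<le> real ((Suc m)^2)" by (simp add: power2_eq_square)
      then show "real (2 * j0) / real ((Suc m)^2) \<le> real (2*j0) * (1 / real (Suc m))"
        by (simp add: divide_simps mult_left_mono)
    qed
    have "(\<lambda>m. 1 / real (Suc m)) \<longlonglongrightarrow> 0"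
      using LIMSEQ_inverse_real_of_nat by (simp add: inverse_eq_divide)
    then show "(\<lambda>m. real (2*j0) * (1 / real (Suc m))) \<longlonglongrightarrow> 0"
      using tendsto_mult_right_zero by blast
  qed simp
  show ?thesis
    unfolding tendsto_iff dist_real_def
  proof (intro allI impI)
    fix e :: real assume e: "e > 0"
    have "e / 2 > 0" using e by simp
    from reals_Archimedean[OF this] obtain r where "inverse (real (Suc r)) < e / 2" by blast
    then have r: "1 / real (Suc r) < e / 2" by (simp add: inverse_eq_divide)
    have ev1: "eventually (\<lambda>m. real (2 * j0) / real ((Suc m)^2) < e / 2) sequentially"
      using order_tendstoD(2)[OF t0, of "e/2"] e by simp
    have ev2: "eventually (\<lambda>m. \<omega> \<notin> A r m) sequentially" using H by blast
    show "eventually (\<lambda>m. \<bar>cntE ((Suc m)^2) \<omega> / real ((Suc m)^2) - pp\<bar> < e) sequentially"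
      using ev1 ev2
    proof eventually_elim
      case (elim m)
      define M where "M = (Suc m)^2"
      have Mpos: "real M > 0" by (simp add: M_def)
      have a: "\<bar>f M \<omega> - real (card {j0..<M}) * pp\<bar> < (1 / real (Suc r)) * real M"
        using elim(2) unfolding A_def M_def by (auto simp: space_PM)
      have "\<bar>cntE M \<omega> - real M * pp\<bar> \<le> \<bar>cntE M \<omega> - f M \<omega>\<bar> + \<bar>f M \<omega> - real (card {j0..<M}) * pp\<bar>
               + \<bar>real (card {j0..<M}) * pp - real M * pp\<bar>" by linarith
      also have "\<dots> < real j0 + (1 / real (Suc r)) * real M + real j0"
        using cnt_f[of M \<omega>] a mu_bound[of M] by linarith
      finally have b: "\<bar>cntE M \<omega> - real M * pp\<bar> < real (2 * j0) + (1 / real (Suc r)) * real M" by simp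
      have "\<bar>cntE M \<omega> / real M - pp\<bar> = \<bar>cntE M \<omega> - real M * pp\<bar> / real M"
        using Mpos by (simp add: field_simps abs_div)
      also have "\<dots> < (real (2 * j0) + (1 / real (Suc r)) * real M) / real M"
        using b Mpos by (intro divide_strict_right_mono) auto
      also have "\<dots> = real (2 * j0) / real M + 1 / real (Suc r)"
        using Mpos by (simp add: field_simps)
      also have "\<dots> < e / 2 + e / 2" using elim(1) r unfolding M_def by linarith
      finally show ?case unfolding M_def by simp
    qed
  qed
qed

lemma block_iff: "block (\<lambda>p. \<omega> (idx p)) l j = u \<longleftrightarrow> \<omega> \<in> E j"
proof -
  have "block (\<lambda>p. \<omega> (idx p)) l j = u \<longleftrightarrow> (\<forall>k<l. \<omega> (idx (j*l+k)) = u!k)"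
    unfolding block_def using len_u by (auto simp: list_eq_iff_nth_eq)
  also have "\<dots> \<longleftrightarrow> \<omega> \<in> E j"
  proof
    assume H: "\<forall>k<l. \<omega> (idx (j*l+k)) = u!k"
    show "\<omega> \<in> E j" unfolding E_def B_def
    proof (intro CollectI ballI)
      fix p assume "p \<in> {j*l..<j*l+l}"
      then have p: "p = j*l + (p - j*l)" "p - j*l < l" by auto
      define d where "d = p - j*l"
      have pd: "p = j*l + d" "d < l" using p by (auto simp: d_def)
      have "p mod l = d" using pd by simp
      then show "\<omega> (idx p) = u ! (p mod l)" using H pd by simp
    qed
  next
    assume H: "\<omega> \<in> E j"
    show "\<forall>k<l. \<omega> (idx (j*l+k)) = u!k"
    proof (intro allI impI)
      fix k assume k: "k < l"
      then have "j*l+k \<in> B j" by (simp add: B_def)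
      then have "\<omega> (idx (j*l+k)) = u!((j*l+k) mod l)" using H by (auto simp: E_def)
      then show "\<omega> (idx (j*l+k)) = u!k" using k by (simp add: mult.commute)
    qed
  qed
  finally show ?thesis .
qed

lemma occ_eq: "real (aligned_occ (\<lambda>p. \<omega> (idx p)) u n) = cntE (n div l) \<omega>"
  unfolding aligned_occ_def cntE_def len_u block_iff ..

lemma div_at_top: "filterlim (\<lambda>n. n div l) at_top at_top"
  unfolding filterlim_at_top
proof (intro allI)
  fix Z
  show "eventually (\<lambda>n. Z \<le> n div l) at_top"
    unfolding eventually_at_top_linorder
    using l_pos by (intro exI[of _ "Z*l"]) (auto simp: less_eq_div_iff_mult_less_eq)
qed

lemma ratio_one: "(\<lambda>n. real (n div l) * real l / real n) \<longlonglongrightarrow> 1"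
proof (rule tendsto_sandwich[of "\<lambda>n. 1 - real l * (1 / real n)" _ _ "\<lambda>_. 1"])
  show "eventually (\<lambda>n. 1 - real l * (1 / real n) \<le> real (n div l) * real l / real n) sequentially"
    using eventually_gt_at_top[of 0]
  proof eventually_elim
    case (elim n)
    have "n < (n div l) * l + l" using l_pos div_mult_mod_eq[of n l] mod_less_divisor[of l n]
      by linarith
    then have "real n < real (n div l * l + l)" by (simp only: of_nat_less_iff)
    then have "real n - real l \<le> real (n div l) * real l" by simp
    then have "(real n - real l) / real n \<le> real (n div l) * real l / real n"
      by (intro divide_right_mono) auto
    moreover have "1 - real l * (1 / real n) = (real n - real l) / real n"
      using elim by (simp add: field_simps)
    ultimately show ?case by simp
  qed
  show "eventually (\<lambda>n. real (n div l) * real l / real n \<le> 1) sequentially"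
  proof (intro always_eventually allI)
    fix n
    have "(n div l) * l \<le> n" by simp
    then have "real (n div l) * real l \<le> real n" by (simp only: of_nat_mult[symmetric] of_nat_le_iff)
    then show "real (n div l) * real l / real n \<le> 1"
      by (cases "n = 0") (auto simp: divide_simps)
  qed
  have "(\<lambda>n. 1 - real l * (1 / real n)) \<longlonglongrightarrow> 1 - real l * 0"
    by (intro tendsto_intros)
  then show "(\<lambda>n. 1 - real l * (1 / real n)) \<longlonglongrightarrow> 1" by simp
qed simp

lemma AE_conv: "AE \<omega> in PM. (\<lambda>n. real (aligned_occ (\<lambda>p. \<omega> (idx p)) u n) / (real n / real (length u)))
     \<longlonglongrightarrow> 1 / real CARD('a) ^ length u"
  using AE_sq
proof (rule AE_mp, intro AE_I2 impI)
  fix \<omega> assume H: "\<forall>r. eventually (\<lambda>m. \<omega> \<notin> A r m) sequentially"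
  have c1: "(\<lambda>N. cntE N \<omega> / real N) \<longlonglongrightarrow> pp"
  proof (rule interp_squares[OF _ _ sq_conv[OF H]])
    show "mono (\<lambda>N. cntE N \<omega>)"
      unfolding mono_def cntE_def by (auto intro!: card_mono)
  qed (simp add: cntE_def)
  have c2: "(\<lambda>n. cntE (n div l) \<omega> / real (n div l)) \<longlonglongrightarrow> pp"
    using filterlim_compose[OF c1 div_at_top] by simp
  have c3: "(\<lambda>n. cntE (n div l) \<omega> / real (n div l) * (real (n div l) * real l / real n)) \<longlonglongrightarrow> pp * 1"
    by (intro tendsto_mult c2 ratio_one)
  have ev: "eventually (\<lambda>n. cntE (n div l) \<omega> / real (n div l) * (real (n div l) * real l / real n)
        = real (aligned_occ (\<lambda>p. \<omega> (idx p)) u n) / (real n / real (length u))) sequentially"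
    using eventually_ge_at_top[of l]
  proof eventually_elim
    case (elim n)
    then have "n div l > 0" using l_pos by (simp add: div_greater_zero_iff)
    then show ?case unfolding occ_eq len_u using elim l_pos by (simp add: field_simps)
  qed
  show "(\<lambda>n. real (aligned_occ (\<lambda>p. \<omega> (idx p)) u n) / (real n / real (length u)))
     \<longlonglongrightarrow> 1 / real CARD('a) ^ length u"
    using Lim_transform_eventually[OF c3 ev] by (simp add: pp_def len_u power_one_over)
qed

end

lemma blk_div: fixes p j l :: nat assumes "p \<in> {j*l..<j*l+l}" shows "p div l = j"
  by (rule div_nat_eqI) (use assms in \<open>auto simp: mult.commute\<close>)

lemma blk_same: fixes p j l k :: nat shows "p \<in> {j*l..<j*l+l} \<Longrightarrow> p \<in> {k*l..<k*l+l} \<Longrightarrow> j = k"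
  using blk_div[of p j l] blk_div[of p k l] by simp

lemma blk_id: "l \<ge> 1 \<Longrightarrow> length (u::'a::finite list) = l \<Longrightarrow> blk (\<lambda>p. p) l u 0 1 (\<lambda>j. {j})"
  unfolding blk_def
proof (intro conjI allI impI)
  fix j k assume "(\<lambda>p. p) ` {j*l..<j*l+l} \<inter> (\<lambda>p. p) ` {k*l..<k*l+l} \<noteq> {}"
  then obtain p where "p \<in> {j*l..<j*l+l}" "p \<in> {k*l..<k*l+l}" by blast
  then show "k \<in> {j}" using blk_same by blast
qed auto

lemma blk_dbl: "l \<ge> 1 \<Longrightarrow> length (u::'a::finite list) = l \<Longrightarrow> blk (\<lambda>p. 2*p) l u 0 1 (\<lambda>j. {j})"
  unfolding blk_def
proof (intro conjI allI impI)
  fix j k assume "(\<lambda>p. 2*p) ` {j*l..<j*l+l} \<inter> (\<lambda>p. 2*p) ` {k*l..<k*l+l} \<noteq> {}"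
  then obtain p q where "p \<in> {j*l..<j*l+l}" "q \<in> {k*l..<k*l+l}" "2*p = 2*q" by blast
  then have "p \<in> {j*l..<j*l+l}" "p \<in> {k*l..<k*l+l}" by simp_all
  then show "k \<in> {j}" using blk_same by blast
next
  fix j show "inj_on (\<lambda>p. 2*p) {j*l..<j*l+l}" by (rule inj_onI) simp
qed auto

definition idxJ :: "nat \<Rightarrow> nat" where
  "idxJ p = (if even p then p div 2 else p - 1)"

definition DJ :: "nat \<Rightarrow> nat set" where
  "DJ j = {j} \<union> {j div 2 - 1 .. j div 2 + 1} \<union> {2*j - 2 .. 2*j + 1}"

lemma cross_bound:
  fixes l p q j k :: nat
  assumes l: "l \<ge> 1" and p: "p \<in> {j*l..<j*l+l}" and q: "q \<in> {k*l..<k*l+l}" and eq: "p + 2 = 2 * q"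
  shows "2*k \<le> j + 2 \<and> j \<le> 2*k + 1"
proof
  have p1: "j*l \<le> p" "p < j*l+l" using p by auto
  have q1: "k*l \<le> q" "q < k*l+l" using q by auto
  show "2*k \<le> j + 2"
  proof (rule ccontr)
    assume "\<not> 2*k \<le> j + 2"
    then have "(j+3)*l \<le> (2*k)*l" by (intro mult_le_mono1) simp
    then have "j*l + 3*l \<le> 2*(k*l)" by (simp add: algebra_simps)
    then show False using p1 q1 eq l by linarith
  qed
  show "j \<le> 2*k + 1"
  proof (rule ccontr)
    assume "\<not> j \<le> 2*k + 1"
    then have "(2*k+2)*l \<le> j*l" by (intro mult_le_mono1) simp
    then have "2*(k*l) + 2*l \<le> j*l" by (simp add: algebra_simps)
    then show False using p1 q1 eq l by linarith
  qed
qed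

lemma blk_join: "l \<ge> 1 \<Longrightarrow> length (u::'a::finite list) = l \<Longrightarrow> blk idxJ l u 3 8 DJ"
proof (unfold blk_def, intro conjI allI impI)
  assume l: "l \<ge> 1"
  show "inj_on idxJ {j*l..<j*l+l}" if j: "3 \<le> j" for j
  proof (rule inj_onI)
    fix p q assume p: "p \<in> {j*l..<j*l+l}" and q: "q \<in> {j*l..<j*l+l}" and e: "idxJ p = idxJ q"
    have no: False if "p + 2 = 2 * q" "p \<in> {j*l..<j*l+l}" "q \<in> {j*l..<j*l+l}" for p q
    proof -
      have "2*j \<le> j + 2" using cross_bound[OF l that(2) that(3) that(1)] by simp
      then show False using j by simp
    qed
    show "p = q"
    proof (cases "even p"; cases "even q")
      assume "even p" "even q"
      then show ?thesis using e unfolding idxJ_def by (auto elim!: evenE)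
    next
      assume "even p" "odd q"
      then have "p + 2 = 2 * q" using e unfolding idxJ_def
        by (auto elim!: evenE oddE)
      then show ?thesis using no p q by blast
    next
      assume "odd p" "even q"
      then have "q + 2 = 2 * p" using e unfolding idxJ_def
        by (auto elim!: evenE oddE)
      then show ?thesis using no p q by blast
    next
      assume "odd p" "odd q"
      then show ?thesis using e unfolding idxJ_def by (auto elim!: oddE)
    qed
  qed
  show "finite (DJ j)" for j by (simp add: DJ_def)
  show "card (DJ j) \<le> 8" for j
  proof -
    have "card (DJ j) \<le> card {j} + card {j div 2 - 1 .. j div 2 + 1} + card {2*j - 2 .. 2*j + 1}"
      unfolding DJ_def
      using card_Un_le[of "{j} \<union> {j div 2 - 1 .. j div 2 + 1}" "{2*j - 2 .. 2*j + 1}"]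
        card_Un_le[of "{j}" "{j div 2 - 1 .. j div 2 + 1}"] by linarith
    also have "\<dots> \<le> 8" by simp
    finally show ?thesis .
  qed
  show "k \<in> DJ j" if H: "idxJ ` {j*l..<j*l+l} \<inter> idxJ ` {k*l..<k*l+l} \<noteq> {}" for j k
  proof -
    obtain p q where p: "p \<in> {j*l..<j*l+l}" and q: "q \<in> {k*l..<k*l+l}" and e: "idxJ p = idxJ q"
      using H by blast
    consider "p = q" | "p + 2 = 2 * q" | "q + 2 = 2 * p"
    proof (cases "even p"; cases "even q")
      assume "even p" "even q"
      then have "p = q" using e unfolding idxJ_def by (auto elim!: evenE)
      then show ?thesis using that by blast
    next
      assume "even p" "odd q"
      then have "p + 2 = 2 * q" using e unfolding idxJ_def
        by (auto elim!: evenE oddE)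
      then show ?thesis using that by blast
    next
      assume "odd p" "even q"
      then have "q + 2 = 2 * p" using e unfolding idxJ_def
        by (auto elim!: evenE oddE)
      then show ?thesis using that by blast
    next
      assume "odd p" "odd q"
      then have "p = q" using e unfolding idxJ_def by (auto elim!: oddE)
      then show ?thesis using that by blast
    qed
    then show ?thesis
    proof cases
      case 1
      then have "k = j" using blk_div[OF p] blk_div[OF q] by simp
      then show ?thesis by (simp add: DJ_def)
    next
      case 2
      from cross_bound[OF l p q this] have "j div 2 - 1 \<le> k \<and> k \<le> j div 2 + 1" by presburger
      then show ?thesis unfolding DJ_def by auto
    next
      case 3
      from cross_bound[OF l q p this] have "2*j - 2 \<le> k \<and> k \<le> 2*j + 1" by presburger
      then show ?thesis unfolding DJ_def by auto
    qed
  qed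
qed auto


lemma join_eq: fixes x :: "nat \<Rightarrow> 'a" shows "join x (\<lambda>i. x (2*i)) = (\<lambda>p. x (idxJ p))"
proof
  fix p show "join x (\<lambda>i. x (2*i)) p = x (idxJ p)"
  proof (cases "even p")
    case True then show ?thesis by (simp add: join_def idxJ_def)
  next
    case False
    then obtain m where "p = 2*m+1" by (elim oddE)
    then show ?thesis by (simp add: join_def idxJ_def)
  qed
qed

lemma AE_normal_gen:
  fixes idx :: "nat \<Rightarrow> nat"
  assumes H: "\<And>u::'a::finite list. length u \<ge> 1 \<Longrightarrow> \<exists>j0 C D. blk idx (length u) u j0 C D"
  shows "AE \<omega> in (PM::(nat\<Rightarrow>'a) measure). normal (\<lambda>p. \<omega> (idx p))"
proof -
  have "AE \<omega> in (PM::(nat\<Rightarrow>'a) measure). \<forall>u::'a list. length u \<ge> 1 \<longrightarrow>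
     (\<lambda>n. real (aligned_occ (\<lambda>p. \<omega> (idx p)) u n) / (real n / real (length u)))
       \<longlonglongrightarrow> 1 / real CARD('a) ^ length u"
  proof (subst AE_all_countable, intro allI AE_impI)
    fix u :: "'a list" assume "length u \<ge> 1"
    then obtain j0 C D where "blk idx (length u) u j0 C D" using H by blast
    from blk.AE_conv[OF this]
    show "AE \<omega> in (PM::(nat\<Rightarrow>'a) measure).
     (\<lambda>n. real (aligned_occ (\<lambda>p. \<omega> (idx p)) u n) / (real n / real (length u)))
       \<longlonglongrightarrow> 1 / real CARD('a) ^ length u" .
  qed
  then show ?thesis unfolding normal_def .
qed

lemma exists_x:
  "\<exists>x::nat\<Rightarrow>'a::finite. normal x \<and> normal (\<lambda>i. x (2*i)) \<and> normal (join x (\<lambda>i. x (2*i)))"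
proof -
  interpret prob_space "PM :: (nat \<Rightarrow> 'a) measure" by (rule prob_space_PM)
  have a1: "AE \<omega> in (PM::(nat\<Rightarrow>'a) measure). normal (\<lambda>p. \<omega> p)"
    using AE_normal_gen[of "\<lambda>p. p"] blk_id by blast
  have a2: "AE \<omega> in (PM::(nat\<Rightarrow>'a) measure). normal (\<lambda>p. \<omega> (2*p))"
    using AE_normal_gen[of "\<lambda>p. 2*p"] blk_dbl by blast
  have a3: "AE \<omega> in (PM::(nat\<Rightarrow>'a) measure). normal (\<lambda>p. \<omega> (idxJ p))"
    using AE_normal_gen[of idxJ] blk_join by blast
  have all: "AE \<omega> in (PM::(nat\<Rightarrow>'a) measure). normal (\<lambda>p. \<omega> p) \<and> normal (\<lambda>p. \<omega> (2*p)) \<and> normal (\<lambda>p. \<omega> (idxJ p))"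
    using a1 a2 a3 by simp
  show ?thesis
  proof (rule ccontr)
    assume "\<not> ?thesis"
    then have "\<not> (normal (\<lambda>p. \<omega> p) \<and> normal (\<lambda>p. \<omega> (2*p)) \<and> normal (\<lambda>p. \<omega> (idxJ p)))" for \<omega> :: "nat \<Rightarrow> 'a"
      unfolding join_eq by auto
    with all have "AE \<omega> in (PM::(nat\<Rightarrow>'a) measure). False" by simp
    then show False by (simp add: AE_False)
  qed
qed


definition Cmp :: "nat \<Rightarrow> 'a kaut" where
  "Cmp L = \<lparr>states = {..<2*L},
     trans = {(s, \<alpha>, s'). s < 2*L \<and> s' = Suc s mod (2*L) \<and>
        (if even s then (\<exists>a. \<alpha> = [Some a, Some a, if s = 0 then Some a else None])
         else (\<exists>b. \<alpha> = [None, Some b, None]))},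
     init = {0}\<rparr>"

lemma even_mod2L: "even (i mod (2*L)) \<longleftrightarrow> even (i::nat)"
  by (simp add: dvd_mod_iff)

lemma Cmp_run:
  assumes L: "L \<ge> 1" and run: "accepting_run 3 (Cmp L :: 'a kaut) r lab"
  shows "r i = i mod (2*L)" and "lab i ! 1 \<noteq> None" and "(lab i ! 0 \<noteq> None) \<longleftrightarrow> even i"
    and "even i \<Longrightarrow> lab i ! 0 = lab i ! 1"
proof -
  have tr: "(r i, lab i, r (Suc i)) \<in> trans (Cmp L :: 'a kaut)" for i
    using run unfolding accepting_run_def by blast
  show ri: "r i = i mod (2*L)" for i
  proof (induction i)
    case 0 then show ?case using run by (simp add: accepting_run_def Cmp_def)
  next
    case (Suc i)
    then show ?case using tr[of i] by (simp add: Cmp_def mod_Suc_eq)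
  qed
  have T: "if even i then (\<exists>a. lab i = [Some a, Some a, if i mod (2*L) = 0 then Some a else None])
         else (\<exists>b. lab i = [None, Some b, None])"
    using tr[of i] unfolding ri by (simp add: Cmp_def even_mod2L split: if_splits)
  show "lab i ! 1 \<noteq> None" using T by (auto split: if_splits)
  show "(lab i ! 0 \<noteq> None) \<longleftrightarrow> even i" using T by (auto split: if_splits)
  show "even i \<Longrightarrow> lab i ! 0 = lab i ! 1" using T by (auto split: if_splits)
qed

lemma card_even_less: "card {k. k < i \<and> even (k::nat)} = (i + 1) div 2"
proof (induction i)
  case 0 then show ?case by simp
next
  case (Suc i)
  have "{k. k < Suc i \<and> even k} = {k. k < i \<and> even k} \<union> (if even i then {i} else {})"
    by (auto simp: less_Suc_eq)
  then show ?case using Suc by (auto simp: card_insert_if)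
qed

lemma comp_all:
  assumes "\<And>i. lab i ! j \<noteq> None"
  shows "comp lab j m = the (lab m ! j)"
proof -
  have c: "cnt lab j i = i" for i
    unfolding cnt_def using assms by simp
  have "(LEAST i. lab i ! j \<noteq> None \<and> cnt lab j i = m) = m"
    by (intro Least_equality) (auto simp: c assms)
  then show ?thesis unfolding comp_def by simp
qed

lemma comp_even:
  assumes "\<And>i. (lab i ! j \<noteq> None) \<longleftrightarrow> even i"
  shows "comp lab j m = the (lab (2*m) ! j)"
proof -
  have c: "cnt lab j i = (i + 1) div 2" for i
    unfolding cnt_def using assms card_even_less[of i] by simp
  have "(LEAST i. lab i ! j \<noteq> None \<and> cnt lab j i = m) = 2*m"
  proof (rule Least_equality)
    have "lab (2*m) ! j \<noteq> None" using assms[of "2*m"] by simp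
    then show "lab (2*m) ! j \<noteq> None \<and> cnt lab j (2*m) = m" by (simp add: c)
    fix y assume "lab y ! j \<noteq> None \<and> cnt lab j y = m"
    then have "even y" "(y+1) div 2 = m" using assms c by auto
    then show "2*m \<le> y" by (auto elim!: evenE)
  qed
  then show ?thesis unfolding comp_def by simp
qed

lemma Cmp_compressor:
  assumes L: "L \<ge> 1"
  shows "compressor (Cmp L :: 'a kaut)"
  unfolding compressor_def
proof (intro conjI allI impI)
  show "is_kaut 3 (Cmp L :: 'a kaut)"
    unfolding is_kaut_def Cmp_def using L by (auto split: if_splits)
  show "is_det 2 (Cmp L :: 'a kaut)"
    unfolding is_det_def Cmp_def by (auto split: if_splits simp: less_Suc_eq numeral_2_eq_2)
  fix r lab r' lab'
  assume a: "accepting_run 3 (Cmp L :: 'a kaut) r lab" "accepting_run 3 (Cmp L :: 'a kaut) r' lab'"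
    "comp lab 1 = comp lab' 1" "comp lab 0 \<noteq> comp lab' 0"
  have c0: "comp lab 0 = (\<lambda>m. comp lab 1 (2*m))" if "accepting_run 3 (Cmp L :: 'a kaut) r lab" for r lab
  proof
    fix m
    show "comp lab 0 m = comp lab 1 (2*m)"
      using comp_even[of lab 0 m] comp_all[of lab 1 "2*m"] Cmp_run[OF L that] by simp
  qed
  have False using a c0[OF a(1)] c0[OF a(2)] by simp
  then show "comp lab 2 \<noteq> comp lab' 2" ..
qed


definition rlab :: "nat \<Rightarrow> (nat \<Rightarrow> 'a) \<Rightarrow> nat \<Rightarrow> 'a option list" where
  "rlab L x i = (if even i then [Some (x i), Some (x i), if i mod (2*L) = 0 then Some (x i) else None]
                 else [None, Some (x i), None])"

lemma rlab_run:
  assumes L: "L \<ge> 1"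
  shows "accepting_run 3 (Cmp L :: 'a kaut) (\<lambda>i. i mod (2*L)) (rlab L x)"
  unfolding accepting_run_def
proof (intro conjI allI impI)
  show "0 mod (2*L) \<in> init (Cmp L :: 'a kaut)" by (simp add: Cmp_def)
  fix i
  show "(i mod (2*L), rlab L x i, Suc i mod (2*L)) \<in> trans (Cmp L :: 'a kaut)"
    using L by (simp add: Cmp_def rlab_def even_mod2L mod_Suc_eq)
next
  fix j :: nat assume "j < 3"
  then consider "j = 0" | "j = 1" | "j = 2" by linarith
  then show "infinite {i. rlab L x i ! j \<noteq> None}"
  proof cases
    case 1
    show ?thesis unfolding infinite_nat_iff_unbounded_le
    proof (intro allI)
      fix m :: nat
      have "2*m \<ge> m" by simp
      moreover have "rlab L x (2*m) ! j \<noteq> None" by (simp add: rlab_def 1)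
      ultimately show "\<exists>n\<ge>m. n \<in> {i. rlab L x i ! j \<noteq> None}" by blast
    qed
  next
    case 2
    show ?thesis unfolding infinite_nat_iff_unbounded_le
      by (intro allI) (auto simp: rlab_def 2)
  next
    case 3
    show ?thesis unfolding infinite_nat_iff_unbounded_le
    proof (intro allI)
      fix m
      have "2*L*m \<ge> m" using L by simp
      moreover have "rlab L x (2*L*m) ! j \<noteq> None" by (simp add: rlab_def 3)
      ultimately show "\<exists>n\<ge>m. n \<in> {i. rlab L x i ! j \<noteq> None}" by blast
    qed
  qed
qed

lemma rlab_comp1: "comp (rlab L x) 1 = x"
proof
  fix m show "comp (rlab L x) 1 m = x m"
    by (subst comp_all) (auto simp: rlab_def)
qed

lemma rlab_comp0: "comp (rlab L x) 0 = (\<lambda>m. x (2*m))"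
proof
  fix m show "comp (rlab L x) 0 m = x (2*m)"
    by (subst comp_even) (auto simp: rlab_def)
qed

lemma cnt_rlab0: "cnt (rlab L x) 0 n = (n + 1) div 2"
proof -
  have "{i. i < n \<and> rlab L x i ! 0 \<noteq> None} = {k. k < n \<and> even k}" by (auto simp: rlab_def)
  then show ?thesis unfolding cnt_def using card_even_less[of n] by simp
qed

lemma cnt_rlab2: assumes L: "L \<ge> 1" shows "cnt (rlab L x) 2 n \<le> n div (2*L) + 1"
proof -
  have "{i. i < n \<and> rlab L x i ! 2 \<noteq> None} \<subseteq> (\<lambda>t. 2*L*t) ` {..n div (2*L)}"
  proof
    fix i assume "i \<in> {i. i < n \<and> rlab L x i ! 2 \<noteq> None}"
    then have i: "i < n" "i mod (2*L) = 0" by (auto simp: rlab_def split: if_splits)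
    then obtain t where t: "i = 2*L*t" by (metis mod_0_imp_dvd dvd_def)
    have "t \<le> n div (2*L)" using i t L by (simp add: less_eq_div_iff_mult_less_eq mult.commute)
    then show "i \<in> (\<lambda>t. 2*L*t) ` {..n div (2*L)}" using t by blast
  qed
  then have "cnt (rlab L x) 2 n \<le> card ((\<lambda>t. 2*L*t) ` {..n div (2*L)})"
    unfolding cnt_def by (intro card_mono) auto
  also have "\<dots> \<le> n div (2*L) + 1" using card_image_le[of "{..n div (2*L)}" "\<lambda>t. 2*L*t"] by simp
  finally show ?thesis .
qed

lemma rlab_ratio:
  assumes L: "L \<ge> 1"
  shows "run_ratio (rlab L x) 0 2 \<le> ereal (2 / real L)"
proof -
  have ev: "eventually (\<lambda>n. ereal (real (cnt (rlab L x) 2 n) / real (cnt (rlab L x) 0 n)) \<le> ereal (2 / real L)) sequentially"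
    using eventually_ge_at_top[of "2*L"]
  proof eventually_elim
    case (elim n)
    define a where "a = cnt (rlab L x) 2 n"
    define b where "b = cnt (rlab L x) 0 n"
    have a: "a \<le> n div (2*L) + 1" using cnt_rlab2[OF L] by (simp add: a_def)
    have b: "b = (n+1) div 2" by (simp add: b_def cnt_rlab0)
    have "a * (2*L) \<le> (n div (2*L) + 1) * (2*L)" using a by (intro mult_le_mono1)
    also have "\<dots> \<le> n + 2*L"
    proof -
      have "n div (2*L) * (2*L) \<le> n" by (rule div_times_less_eq_dividend)
      then show ?thesis by (simp add: add_mult_distrib)
    qed
    finally have "a * (2*L) \<le> n + 2*L" .
    moreover have "n \<le> 2 * b" using b by linarith
    ultimately have ab: "a * L \<le> 2 * b" using elim by linarith
    have bpos: "b > 0" using b elim L by simp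
    have "real a * real L \<le> 2 * real b" using ab by (metis of_nat_le_iff of_nat_mult of_nat_numeral)
    then have "real a / real b \<le> 2 / real L" using bpos L by (simp add: divide_simps mult.commute)
    then show ?case by (simp add: a_def b_def)
  qed
  have "run_ratio (rlab L x) 0 2 \<le> limsup (\<lambda>n. ereal (real (cnt (rlab L x) 2 n) / real (cnt (rlab L x) 0 n)))"
    unfolding run_ratio_def by (rule Liminf_le_Limsup) simp
  also have "\<dots> \<le> ereal (2 / real L)" by (rule Limsup_bounded[OF ev])
  finally show ?thesis .
qed

lemma run_ratio_nonneg: "0 \<le> run_ratio lab i out"
  unfolding run_ratio_def by (intro Liminf_bounded always_eventually allI) simp

lemma rho_cond_zero: "rho_cond (\<lambda>i. x (2*i)) (x :: nat \<Rightarrow> 'a) = 0"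
proof -
  define v where "v = rho_cond (\<lambda>i. x (2*i)) x"
  have up: "v \<le> ereal (2 / real L)" if L: "L \<ge> 1" for L
  proof -
    have "run_ratio (rlab L x) 0 2 \<in> {run_ratio lab 0 2 | C r lab. compressor (C :: 'a kaut) \<and>
                  accepting_run 3 C r lab \<and> comp lab 0 = (\<lambda>i. x (2*i)) \<and> comp lab 1 = x}"
      using Cmp_compressor[OF L] rlab_run[OF L] rlab_comp0 rlab_comp1 by blast
    then have "v \<le> run_ratio (rlab L x) 0 2" unfolding v_def rho_cond_def by (rule Inf_lower)
    then show ?thesis using rlab_ratio[OF L] by (rule order_trans)
  qed
  have lo: "0 \<le> v" unfolding v_def rho_cond_def
    by (rule Inf_greatest) (auto simp: run_ratio_nonneg)
  have "v \<le> 2" using up[of 1] by simp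
  then obtain t where t: "v = ereal t" using lo by (cases v) auto
  have "t \<le> 0"
  proof (rule ccontr)
    assume "\<not> t \<le> 0"
    then have tp: "t > 0" by simp
    obtain n :: nat where n: "2 / t < real n" using reals_Archimedean2 by blast
    have "0 < 2 / t" using tp by simp
    then have "real n > 0" using n by linarith
    then have n1: "n \<ge> 1" by simp
    have "t \<le> 2 / real n" using up[OF n1] t by simp
    moreover have "2 / real n < t" using n tp n1 by (simp add: divide_simps mult.commute)
    ultimately show False by simp
  qed
  then show ?thesis using lo t unfolding v_def by simp
qed


theorem theorem8:
  assumes "card (UNIV :: 'a::finite set) \<ge> 2"
  shows "\<exists>x y :: nat \<Rightarrow> 'a. normal x \<and> normal y \<and> normal (join x y) \<and>
           \<not> fs_independent x y"
proof -
  obtain x :: "nat \<Rightarrow> 'a" where x: "normal x" "normal (\<lambda>i. x (2*i))" "normal (join x (\<lambda>i. x (2*i)))"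
    using exists_x by blast
  have "\<not> fs_independent x (\<lambda>i. x (2*i))"
    unfolding fs_independent_def using rho_cond_zero[of x] by auto
  then show ?thesis using x by blast
qed

end
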